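(* Consider the delay differential system \[ \begin{aligned} \dot T(t)&= s-dT(t)+aT(t)\Big(1-\frac{T(t)+I(t)}{T_{\max}}\Big)-\frac{bT(t)V(t)}{1+\alpha V(t)},\\ \dot I(t)&= \frac{bT(t-\tau)V(t-\tau)}{1+\alpha V(t-\tau)}+aI(t)\Big(1-\frac{T(t)+I(t)}{T_{\max}}\Big)-\mu I(t),\\ \dot V(t)&= pI(t)-cV(t), \end{aligned} \] with positive constants $s,d,a,T_{\max},b,\alpha,\mu,p,c$, $\tau\ge0$, and nonnegative continuous initial data on $[-\tau,0]$. Then every solution satisfies \[ \limsup_{t\to\infty}T(t)\le T_0=\frac{T_{\max}}{2a}\Big[a-d+\sqrt{(a-d)^2+\tfrac{4as}{T_{\max}}}\Big], \] and hence for every sufficiently small $\epsilon>0$ there is $t_1>0$ such that $T(t)\le T_0+\epsilon$ for $t>t_1$. *)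

theory Defs
  imports "HOL-Analysis.Analysis"
begin

definition T0_bound :: "real \<Rightarrow> real \<Rightarrow> real \<Rightarrow> real \<Rightarrow> real" where
  "T0_bound s d a Tmax = Tmax / (2 * a) * (a - d + sqrt ((a - d)^2 + 4 * a * s / Tmax))"

end

theory Submission
  imports Defs
begin


lemma last_time:
  fixes f :: "real \<Rightarrow> real"
  assumes "continuous_on {x..y} f" "f x \<ge> c" "f y < c" "x \<le> y"
  shows "\<exists>t0. x \<le> t0 \<and> t0 < y \<and> f t0 = c \<and> (\<forall>u. t0 < u \<and> u \<le> y \<longrightarrow> f u < c)"
proof -
  let ?Z = "{x..y} \<inter> f -` {c..}"
  have cl: "closed ?Z" by (rule continuous_closed_preimage[OF assms(1)]) auto
  have ne: "?Z \<noteq> {}" using assms by auto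
  have bd: "bdd_above ?Z" by (auto intro: bdd_aboveI[of _ y])
  define t0 where "t0 = Sup ?Z"
  have t0Z: "t0 \<in> ?Z" unfolding t0_def using closed_contains_Sup[OF ne bd cl] .
  have ub: "\<And>u. u \<in> ?Z \<Longrightarrow> u \<le> t0" unfolding t0_def using bd by (simp add: cSup_upper)
  have lt: "t0 < y" using t0Z assms(3) by (cases "t0 = y") auto
  have after: "\<forall>u. t0 < u \<and> u \<le> y \<longrightarrow> f u < c"
  proof (intro allI impI)
    fix u assume u: "t0 < u \<and> u \<le> y"
    show "f u < c"
    proof (rule ccontr)
      assume "\<not> f u < c"
      then have "u \<in> ?Z" using u t0Z by auto
      then show False using ub u by fastforce
    qed
  qed
  have "continuous_on {t0..y} f" using t0Z by (intro continuous_on_subset[OF assms(1)]) auto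
  then obtain z where z: "t0 \<le> z" "z \<le> y" "f z = c"
    using IVT2'[of f y c t0] t0Z lt assms(3) by auto
  have "z = t0" using z after by (metis order.not_eq_order_implies_strict less_irrefl)
  with z t0Z lt after show ?thesis by auto
qed

lemma mvt_within:
  fixes f :: "real \<Rightarrow> real"
  assumes "0 \<le> x" "x < y" "\<And>u. x \<le> u \<Longrightarrow> u \<le> y \<Longrightarrow> (f has_real_derivative f' u) (at u within {0..})"
  shows "\<exists>\<xi>. x < \<xi> \<and> \<xi> < y \<and> f y - f x = f' \<xi> * (y - x)"
proof -
  have "\<exists>\<xi>\<in>{x<..<y}. f y - f x = (\<lambda>h. f' \<xi> * h) (y - x)"
  proof (rule mvt_simple[OF assms(2)])
    fix u assume u: "x \<le> u" "u \<le> y"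
    have "(f has_real_derivative f' u) (at u within {x..y})"
      by (rule has_field_derivative_subset[OF assms(3)[OF u]]) (use assms(1) in auto)
    then show "(f has_derivative (\<lambda>h. f' u * h)) (at u within {x..y})"
      by (simp add: has_field_derivative_def)
  qed
  then show ?thesis by auto
qed

lemma stays_nonneg:
  fixes f D :: "real \<Rightarrow> real"
  assumes cont: "continuous_on {0..} f" and f0: "f 0 \<ge> 0"
    and der: "\<And>t. t \<ge> 0 \<Longrightarrow> (f has_real_derivative D t) (at t within {0..})"
    and pos: "\<And>t. t \<ge> 0 \<Longrightarrow> f t = 0 \<Longrightarrow> D t > 0"
    and t: "t \<ge> 0"
  shows "f t \<ge> 0"
proof (rule ccontr)
  assume "\<not> f t \<ge> 0"
  then have ft: "f t < 0" by simp
  have "continuous_on {0..t} f" by (rule continuous_on_subset[OF cont]) auto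
  then obtain t0 where t0: "0 \<le> t0" "t0 < t" "f t0 = 0" "\<forall>u. t0 < u \<and> u \<le> t \<longrightarrow> f u < 0"
    using last_time[of 0 t f 0] f0 ft t by auto
  have "D t0 > 0" using pos t0 by auto
  then obtain d where d: "d > 0" "\<forall>h>0. t0 + h \<in> {0..} \<longrightarrow> h < d \<longrightarrow> f t0 < f (t0 + h)"
    using has_real_derivative_pos_inc_right[OF der[OF t0(1)]] by blast
  define h where "h = min (d/2) (t - t0)"
  have h: "h > 0" "h < d" "t0 + h \<le> t" using d t0 by (auto simp: h_def)
  then have "f t0 < f (t0 + h)" using d t0 by auto
  moreover have "f (t0 + h) < 0" using t0(4) h by auto
  ultimately show False using t0 by simp
qed

lemma eventually_below:
  fixes f D :: "real \<Rightarrow> real"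
  assumes cont: "continuous_on {0..} f"
    and der: "\<And>t. t \<ge> 0 \<Longrightarrow> (f has_real_derivative D t) (at t within {0..})"
    and eta: "eta > 0"
    and dec: "\<And>t. t \<ge> 0 \<Longrightarrow> f t \<ge> c \<Longrightarrow> D t \<le> - eta"
  shows "\<exists>t1>0. \<forall>t>t1. f t \<le> c"
proof -
  have "\<exists>t1\<ge>0. f t1 \<le> c"
  proof (rule ccontr)
    assume "\<not> (\<exists>t1\<ge>0. f t1 \<le> c)"
    then have gt: "\<And>u. u \<ge> 0 \<Longrightarrow> f u > c" by force
    define K where "K = (\<bar>f 0 - c\<bar> + 1) / eta"
    have K: "K > 0" using eta by (simp add: K_def add_pos_nonneg)
    obtain \<xi> where xi: "0 < \<xi>" "\<xi> < K" "f K - f 0 = D \<xi> * (K - 0)"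
      using mvt_within[of 0 K f D] K der by auto
    have "D \<xi> \<le> - eta" using dec[of \<xi>] gt[of \<xi>] xi by auto
    then have "D \<xi> * K \<le> - eta * K" using K mult_right_mono[of "D \<xi>" "- eta" K] by simp
    also have "- eta * K = - (\<bar>f 0 - c\<bar> + 1)" using eta by (simp add: K_def)
    finally have "f K \<le> c - 1" using xi by auto
    then show False using gt[of K] K by auto
  qed
  then obtain t1 where t1: "t1 \<ge> 0" "f t1 \<le> c" by blast
  have "\<forall>t>t1 + 1. f t \<le> c"
  proof (intro allI impI)
    fix t assume tt: "t > t1 + 1"
    show "f t \<le> c"
    proof (rule ccontr)
      assume "\<not> f t \<le> c"
      then have ftc: "- f t < - c" by simp
      have "continuous_on {t1..t} (\<lambda>x. - f x)"
        by (intro continuous_on_minus continuous_on_subset[OF cont]) (use t1 in auto)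
      then obtain t0 where t0: "t1 \<le> t0" "t0 < t" "- f t0 = - c" "\<forall>u. t0 < u \<and> u \<le> t \<longrightarrow> - f u < - c"
        using last_time[of t1 t "\<lambda>x. - f x" "- c"] t1 ftc tt by auto
      obtain \<xi> where xi: "t0 < \<xi>" "\<xi> < t" "f t - f t0 = D \<xi> * (t - t0)"
        using mvt_within[of t0 t f D] t0 t1 der by auto
      have "f \<xi> > c" using t0(4) xi by force
      then have "D \<xi> \<le> - eta" using dec[of \<xi>] xi t0 t1 by auto
      then have "D \<xi> * (t - t0) < 0" using eta t0 by (simp add: mult_neg_pos)
      then show False using xi t0 \<open>\<not> f t \<le> c\<close> by auto
    qed
  qed
  then show ?thesis using t1 by (intro exI[of _ "t1 + 1"]) auto
qed

lemma neg_contra: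
  fixes g D :: "real \<Rightarrow> real"
  assumes "0 \<le> ts" "ts \<le> t1" "t1 \<le> ts + \<delta>" "g ts \<ge> 0" "g t1 = - N" "N > 0"
    and cont: "continuous_on {ts..t1} g"
    and der: "\<And>u. ts \<le> u \<Longrightarrow> u \<le> t1 \<Longrightarrow> (g has_real_derivative D u) (at u within {0..})"
    and lb: "\<And>u. ts < u \<Longrightarrow> u \<le> t1 \<Longrightarrow> g u < 0 \<Longrightarrow> D u \<ge> - K * N"
    and K: "K \<ge> 0" "K * \<delta> \<le> 1/2"
  shows False
proof -
  obtain t0 where t0: "ts \<le> t0" "t0 < t1" "g t0 = 0" "\<forall>u. t0 < u \<and> u \<le> t1 \<longrightarrow> g u < 0"
    using last_time[of ts t1 g 0] assms by auto
  obtain \<xi> where xi: "t0 < \<xi>" "\<xi> < t1" "g t1 - g t0 = D \<xi> * (t1 - t0)"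
    using mvt_within[of t0 t1 g D] t0 assms der by auto
  have "D \<xi> \<ge> - K * N" using lb[of \<xi>] t0 xi by auto
  then have "D \<xi> * (t1 - t0) \<ge> - K * N * (t1 - t0)" using t0 by (intro mult_right_mono) auto
  moreover have "- K * N * (t1 - t0) \<ge> - K * N * \<delta>"
    using t0 assms K by (intro mult_left_mono_neg) auto
  moreover have "K * N * \<delta> \<le> N / 2" using K assms
    by (metis mult.commute mult.left_commute mult_left_mono less_imp_le times_divide_eq_right mult.right_neutral)
  ultimately have "- N \<ge> - N / 2" using xi t0 assms by linarith
  then show False using assms by simp
qed

lemma IV_nonneg:
  fixes a Tmax b \<alpha> \<mu> p c \<tau> :: real and T I V :: "real \<Rightarrow> real"
  assumes pos: "b > 0" "\<alpha> > 0" "p > 0" "c > 0" "a > 0" "Tmax > 0" "\<mu> > 0" and tau: "\<tau> \<ge> 0"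
    and cont: "continuous_on {-\<tau>..} T" "continuous_on {-\<tau>..} I" "continuous_on {-\<tau>..} V"
    and Tnn: "\<And>t. t \<ge> -\<tau> \<Longrightarrow> T t \<ge> 0"
    and init: "\<And>t. t \<in> {-\<tau>..0} \<Longrightarrow> I t \<ge> 0 \<and> V t \<ge> 0"
    and eqI: "\<And>t. t \<ge> 0 \<Longrightarrow> (I has_real_derivative
        (b * T (t - \<tau>) * V (t - \<tau>) / (1 + \<alpha> * V (t - \<tau>))
         + a * I t * (1 - (T t + I t) / Tmax) - \<mu> * I t))
        (at t within {0..})"
    and eqV: "\<And>t. t \<ge> 0 \<Longrightarrow> (V has_real_derivative (p * I t - c * V t)) (at t within {0..})"
    and t: "t \<ge> 0"
  shows "I t \<ge> 0 \<and> V t \<ge> 0"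
proof (rule ccontr)
  assume nt: "\<not> (I t \<ge> 0 \<and> V t \<ge> 0)"
  define S where "S = {t. 0 \<le> t \<and> (I t < 0 \<or> V t < 0)}"
  have Sne: "S \<noteq> {}" using nt t by (auto simp: S_def)
  have Sbd: "bdd_below S" by (auto simp: S_def intro: bdd_belowI[of _ 0])
  define ts where "ts = Inf S"
  have ts0: "ts \<ge> 0" unfolding ts_def using Sne by (intro cInf_greatest) (auto simp: S_def)
  have below: "I u \<ge> 0 \<and> V u \<ge> 0" if "-\<tau> \<le> u" "u < ts" for u
  proof (cases "u < 0")
    case True then show ?thesis using init that by auto
  next
    case False
    have "u \<notin> S"
    proof
      assume "u \<in> S"
      then have "ts \<le> u" unfolding ts_def using Sbd by (rule cInf_lower)
      then show False using that by simp
    qed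
    then show ?thesis using False by (auto simp: S_def)
  qed
  have ext: "f ts \<ge> 0" if cf: "continuous_on {-\<tau>..} f" and fb: "\<And>u. -\<tau> \<le> u \<Longrightarrow> u < ts \<Longrightarrow> f u \<ge> 0"
    and fi: "\<And>u. u \<in> {-\<tau>..0} \<Longrightarrow> f u \<ge> 0" for f :: "real \<Rightarrow> real"
  proof (cases "-\<tau> < ts")
    case True
    let ?A = "{-\<tau>..ts} \<inter> f -` {0..}"
    have "closed ?A" by (rule continuous_closed_preimage) (auto intro: continuous_on_subset[OF cf])
    moreover have "{-\<tau>..<ts} \<subseteq> ?A" using fb by auto
    ultimately have "closure {-\<tau>..<ts} \<subseteq> ?A" by (rule closure_minimal[rotated])
    then have "{-\<tau>..ts} \<subseteq> ?A" using True by simp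
    moreover have "ts \<in> {-\<tau>..ts}" using True by simp
    ultimately have "ts \<in> ?A" by blast
    then show ?thesis by simp
  next
    case False
    then have "ts = 0" using ts0 tau by simp
    then show ?thesis using fi tau by simp
  qed
  have upto: "I u \<ge> 0 \<and> V u \<ge> 0" if "-\<tau> \<le> u" "u \<le> ts" for u
  proof (cases "u = ts")
    case True
    have "I ts \<ge> 0" by (rule ext[OF cont(2)]) (use below init in auto)
    moreover have "V ts \<ge> 0" by (rule ext[OF cont(3)]) (use below init in auto)
    ultimately show ?thesis using True by simp
  next
    case False then show ?thesis using below that by simp
  qed
  have sub1: "{ts..ts+1} \<subseteq> {-\<tau>..}" using ts0 tau by auto
  have "continuous_on {ts..ts+1} (\<lambda>u. \<bar>T u\<bar> + \<bar>I u\<bar>)"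
    by (intro continuous_intros continuous_on_subset[OF cont(1) sub1] continuous_on_subset[OF cont(2) sub1])
  then obtain u0 where "u0 \<in> {ts..ts+1}" "\<forall>y\<in>{ts..ts+1}. \<bar>T y\<bar> + \<bar>I y\<bar> \<le> \<bar>T u0\<bar> + \<bar>I u0\<bar>"
    using continuous_attains_sup[of "{ts..ts+1}" "\<lambda>u. \<bar>T u\<bar> + \<bar>I u\<bar>"] by auto
  then obtain B where Bb: "\<And>y. y \<in> {ts..ts+1} \<Longrightarrow> \<bar>T y\<bar> + \<bar>I y\<bar> \<le> B" and B0: "B \<ge> 0" by fastforce
  define Mh where "Mh = a * (1 + B / Tmax) + \<mu>"
  have "B / Tmax \<ge> 0" using pos B0 by simp
  then have "a * (1 + B / Tmax) > 0" using pos by (simp add: add_pos_nonneg)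
  then have Mh0: "Mh > 0" using pos unfolding Mh_def by linarith
  have hb: "\<bar>a * (1 - (T u + I u) / Tmax) - \<mu>\<bar> \<le> Mh" if "u \<in> {ts..ts+1}" for u
  proof -
    have x: "\<bar>T u + I u\<bar> \<le> B" using Bb[OF that] by linarith
    have "\<bar>(T u + I u) / Tmax\<bar> \<le> B / Tmax" using x pos by (simp add: abs_divide divide_right_mono)
    then have "\<bar>1 - (T u + I u) / Tmax\<bar> \<le> 1 + B / Tmax" by linarith
    then have "\<bar>a * (1 - (T u + I u) / Tmax)\<bar> \<le> a * (1 + B / Tmax)" using pos
      by (simp add: abs_mult mult_left_mono)
    then show ?thesis unfolding Mh_def using pos by linarith
  qed
  have tsin: "ts \<in> {-\<tau>..}" using ts0 tau by simp
  have e2: "1 / (2 * \<alpha>) > 0" using pos by simp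
  obtain \<delta>1 where d1: "\<delta>1 > 0" "\<forall>u\<in>{-\<tau>..}. dist u ts < \<delta>1 \<longrightarrow> dist (V u) (V ts) < 1 / (2 * \<alpha>)"
    using cont(3)[unfolded continuous_on_iff, rule_format, OF tsin e2] by blast
  have Vts: "V ts \<ge> 0" using upto[of ts] ts0 tau by simp
  have Vlow: "V u > - 1 / (2 * \<alpha>)" if "u \<ge> ts" "u < ts + \<delta>1" for u
  proof -
    have "dist (V u) (V ts) < 1 / (2 * \<alpha>)" using d1 that ts0 tau by (auto simp: dist_real_def)
    then show ?thesis using Vts by (auto simp: dist_real_def)
  qed
  define K where "K = 2 * b * B + Mh + p + 1"
  have bB: "b * B \<ge> 0" using pos B0 by simp
  have K0: "K > 0" using bB Mh0 pos unfolding K_def by linarith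
  have pK: "p \<le> K" "2 * b * B + Mh \<le> K" using bB Mh0 pos unfolding K_def by linarith+
  define \<delta> where "\<delta> = min (min 1 (\<delta>1 / 2)) (1 / (2 * K))"
  have dpos: "\<delta> > 0" using d1 K0 by (simp add: \<delta>_def)
  have d1': "\<delta> \<le> 1" "\<delta> < \<delta>1" using d1 by (auto simp: \<delta>_def)
  have Kd: "K * \<delta> \<le> 1/2"
  proof -
    have "\<delta> \<le> 1 / (2 * K)" by (simp add: \<delta>_def)
    then have "K * \<delta> \<le> K * (1 / (2 * K))" using K0 by (intro mult_left_mono) auto
    then show ?thesis using K0 by simp
  qed
  obtain t' where t': "t' \<in> S" "t' < ts + \<delta>"
    using cInf_less_iff[OF Sne Sbd, of "ts + \<delta>"] dpos by (auto simp: ts_def)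
  have t'ge: "t' \<ge> ts" unfolding ts_def using t'(1) Sbd by (rule cInf_lower)
  define \<phi> where "\<phi> u = max (- I u) (- V u)" for u
  have sub2: "{ts..ts+\<delta>} \<subseteq> {-\<tau>..}" using ts0 tau by auto
  have "continuous_on {ts..ts+\<delta>} \<phi>" unfolding \<phi>_def
    by (intro continuous_intros continuous_on_subset[OF cont(2) sub2] continuous_on_subset[OF cont(3) sub2])
  then obtain t1 where t1: "t1 \<in> {ts..ts+\<delta>}" "\<forall>y\<in>{ts..ts+\<delta>}. \<phi> y \<le> \<phi> t1"
    using continuous_attains_sup[of "{ts..ts+\<delta>}" \<phi>] dpos by auto
  define N where "N = \<phi> t1"
  have "\<phi> t' > 0" using t' by (auto simp: S_def \<phi>_def)
  moreover have "\<phi> t' \<le> \<phi> t1" using t1(2) t'(2) t'ge by simp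
  ultimately have N0: "N > 0" unfolding N_def by linarith
  have Nb: "- I u \<le> N \<and> - V u \<le> N" if "u \<in> {ts..ts+\<delta>}" for u
    using t1(2) that unfolding N_def \<phi>_def by fastforce
  have Fb: "b * T (u - \<tau>) * V (u - \<tau>) / (1 + \<alpha> * V (u - \<tau>)) \<ge> - 2 * b * B * N"
    if u: "ts \<le> u" "u \<le> ts + \<delta>" for u
  proof -
    define w where "w = u - \<tau>"
    have w: "w \<ge> -\<tau>" "w \<le> ts + \<delta>" using u ts0 tau by (auto simp: w_def)
    have Tw: "T w \<ge> 0" using Tnn w by simp
    show ?thesis
    proof (cases "V w \<ge> 0")
      case True
      have "b * T w * V w / (1 + \<alpha> * V w) \<ge> 0" using True Tw pos by simp
      moreover have "- 2 * b * B * N \<le> 0" using pos B0 N0 by simp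
      ultimately show ?thesis unfolding w_def by linarith
    next
      case False
      then have Vn: "V w < 0" by simp
      have wts: "w > ts" using upto[of w] w Vn by force
      have TB: "T w \<le> B" using Bb[of w] wts w d1' by auto
      have VN: "- V w \<le> N" using Nb[of w] wts w by auto
      have Vl: "V w > - 1 / (2 * \<alpha>)" using Vlow[of w] wts w d1' by auto
      define q where "q = 1 + \<alpha> * V w"
      have qh: "q > 1/2"
      proof -
        have "\<alpha> * V w > \<alpha> * (- 1 / (2 * \<alpha>))" using Vl pos by (intro mult_strict_left_mono) auto
        then show ?thesis using pos by (simp add: q_def)
      qed
      have "V w / q - 2 * V w = V w * (1 - 2 * q) / q" using qh by (simp add: field_simps)
      moreover have "V w * (1 - 2 * q) \<ge> 0" using Vn qh by (intro mult_nonpos_nonpos) auto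
      moreover have "V w * (1 - 2 * q) / q \<ge> 0" using calculation(2) qh by simp
      ultimately have r1: "V w / q \<ge> 2 * V w" by linarith
      have "b * T w * V w / q = (b * T w) * (V w / q)" by simp
      also have "\<dots> \<ge> (b * T w) * (2 * V w)" using r1 Tw pos by (intro mult_left_mono) auto
      finally have r2: "b * T w * V w / q \<ge> (b * T w) * (2 * V w)" .
      have "(b * T w) * (2 * V w) \<ge> (b * B) * (2 * V w)"
        using TB Vn pos by (intro mult_right_mono_neg mult_left_mono) auto
      moreover have "(b * B) * (2 * V w) \<ge> (b * B) * (- 2 * N)"
        using VN pos B0 by (intro mult_left_mono) auto
      ultimately show ?thesis using r2 unfolding w_def q_def by (simp add: algebra_simps)
    qed
  qed
  have t1r: "ts \<le> t1" "t1 \<le> ts + \<delta>" using t1 by auto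
  have It0: "I ts \<ge> 0" and Vt0: "V ts \<ge> 0" using upto[of ts] ts0 tau by auto
  show False
  proof (cases "N = - I t1")
    case True
    show False
    proof (rule neg_contra[of ts t1 \<delta> I N _ K])
      show "continuous_on {ts..t1} I" by (rule continuous_on_subset[OF cont(2)]) (use ts0 tau in auto)
      show "\<And>u. ts \<le> u \<Longrightarrow> u \<le> t1 \<Longrightarrow> (I has_real_derivative
        (b * T (u - \<tau>) * V (u - \<tau>) / (1 + \<alpha> * V (u - \<tau>))
         + a * I u * (1 - (T u + I u) / Tmax) - \<mu> * I u)) (at u within {0..})"
        using eqI ts0 by auto
      fix u assume u: "ts < u" "u \<le> t1" "I u < 0"
      have ur: "u \<in> {ts..ts+\<delta>}" "u \<in> {ts..ts+1}" using u t1r d1' by auto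
      have F: "b * T (u - \<tau>) * V (u - \<tau>) / (1 + \<alpha> * V (u - \<tau>)) \<ge> - 2 * b * B * N"
        using Fb[of u] ur by auto
      have eq: "a * I u * (1 - (T u + I u) / Tmax) - \<mu> * I u = I u * (a * (1 - (T u + I u) / Tmax) - \<mu>)"
        by (simp add: algebra_simps)
      have "\<bar>I u * (a * (1 - (T u + I u) / Tmax) - \<mu>)\<bar> \<le> N * Mh"
        unfolding abs_mult using Nb[OF ur(1)] u hb[OF ur(2)] N0
        by (intro mult_mono) auto
      then have "I u * (a * (1 - (T u + I u) / Tmax) - \<mu>) \<ge> - (N * Mh)" by (simp add: abs_le_iff)
      moreover have "- K * N \<le> - 2 * b * B * N - N * Mh"
      proof -
        have "(2 * b * B + Mh) * N \<le> K * N" using N0 pK by (intro mult_right_mono) auto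
        then show ?thesis by (simp add: algebra_simps)
      qed
      ultimately show "b * T (u - \<tau>) * V (u - \<tau>) / (1 + \<alpha> * V (u - \<tau>))
         + a * I u * (1 - (T u + I u) / Tmax) - \<mu> * I u \<ge> - K * N"
        using F eq by linarith
    qed (use ts0 t1r It0 True N0 K0 Kd in auto)
  next
    case False
    then have Vt1: "N = - V t1" unfolding N_def \<phi>_def by (simp add: max_def split: if_splits)
    show False
    proof (rule neg_contra[of ts t1 \<delta> V N _ K])
      show "continuous_on {ts..t1} V" by (rule continuous_on_subset[OF cont(3)]) (use ts0 tau in auto)
      show "\<And>u. ts \<le> u \<Longrightarrow> u \<le> t1 \<Longrightarrow> (V has_real_derivative (p * I u - c * V u)) (at u within {0..})"
        using eqV ts0 by auto
      fix u assume u: "ts < u" "u \<le> t1" "V u < 0"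
      have ur: "u \<in> {ts..ts+\<delta>}" using u t1r by auto
      have "p * I u \<ge> p * (- N)" using Nb[OF ur] pos by (intro mult_left_mono) auto
      moreover have "c * V u < 0" using u pos by (simp add: mult_pos_neg)
      moreover have "p * N \<le> K * N" using N0 pK by (intro mult_right_mono) auto
      ultimately show "p * I u - c * V u \<ge> - K * N" by linarith
    qed (use ts0 t1r Vt0 Vt1 N0 K0 Kd in auto)
  qed
qed


lemma quad_bound:
  fixes s d a Tmax e x :: real
  assumes "a > 0" "Tmax > 0" "s > 0" "e > 0" "x \<ge> T0_bound s d a Tmax + e"
  shows "s - d*x + a*x*(1 - x/Tmax) \<le> -(a/Tmax)*e^2"
proof -
  define r where "r = sqrt ((a - d)^2 + 4 * a * s / Tmax)"
  have "4 * a * s / Tmax \<ge> 0" using assms by simp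
  then have D: "(a - d)^2 + 4 * a * s / Tmax \<ge> 0" by (intro add_nonneg_nonneg) simp_all
  have r2: "r^2 = (a - d)^2 + 4 * a * s / Tmax" unfolding r_def using D by simp
  have r0: "r \<ge> 0" unfolding r_def using D by simp
  define T0 where "T0 = Tmax / (2 * a) * (a - d + r)"
  define T1 where "T1 = Tmax / (2 * a) * (a - d - r)"
  have T0: "T0_bound s d a Tmax = T0" by (simp add: T0_bound_def T0_def r_def)
  have id: "s - d*x + a*x*(1 - x/Tmax) = -(a/Tmax)*((x - T0)*(x - T1))"
  proof -
    have s1: "T0 + T1 = Tmax * (a - d) / a" using assms by (simp add: T0_def T1_def field_simps)
    have s2: "T0 * T1 = (Tmax / (2*a))^2 * ((a-d)^2 - r^2)"
    proof -
      have e1: "(a-d+r)*(a-d-r) = (a-d)^2 - r^2" by (simp add: power2_eq_square algebra_simps)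
      have "T0 * T1 = (Tmax / (2*a))^2 * ((a-d+r)*(a-d-r))"
        by (simp add: T0_def T1_def power2_eq_square mult_ac)
      then show ?thesis using e1 by simp
    qed
    also have "\<dots> = - s * Tmax / a" using assms unfolding r2 by (simp add: field_simps power2_eq_square)
    finally have s2': "T0 * T1 = - s * Tmax / a" .
    have "(x - T0)*(x - T1) = x^2 - (T0+T1)*x + T0*T1" by (simp add: algebra_simps power2_eq_square)
    then have pq: "(x - T0)*(x - T1) = x^2 - (Tmax * (a - d) / a)*x + (- s * Tmax / a)" unfolding s1 s2' .
    show ?thesis unfolding pq using assms by (simp add: field_simps power2_eq_square)
  qed
  have "x - T0 \<ge> e" using assms T0 by simp
  moreover have "x - T1 \<ge> e"
  proof -
    have "Tmax/(2*a) * (a-d-r) \<le> Tmax/(2*a) * (a-d+r)" using assms r0 by (intro mult_left_mono) auto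
    then have "T1 \<le> T0" by (simp only: T0_def T1_def)
    then show ?thesis using assms T0 by simp
  qed
  ultimately have "(x - T0)*(x - T1) \<ge> e * e" using assms by (intro mult_mono) auto
  moreover have "a/Tmax \<ge> 0" using assms by simp
  ultimately have "(a/Tmax) * (e * e) \<le> (a/Tmax) * ((x - T0)*(x - T1))"
    by (intro mult_left_mono)
  then have "(a/Tmax) * ((x - T0)*(x - T1)) \<ge> (a/Tmax) * e^2" by (simp add: power2_eq_square)
  then show ?thesis using id by simp
qed


theorem lemma3:
  fixes s d a Tmax b \<alpha> \<mu> p c \<tau> :: real
    and T I V :: "real \<Rightarrow> real"
  assumes pos: "s > 0" "d > 0" "a > 0" "Tmax > 0" "b > 0" "\<alpha> > 0" "\<mu> > 0" "p > 0" "c > 0"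
    and tau: "\<tau> \<ge> 0"
    and cont: "continuous_on {-\<tau>..} T" "continuous_on {-\<tau>..} I" "continuous_on {-\<tau>..} V"
    and init_nonneg: "\<And>t. t \<in> {-\<tau>..0} \<Longrightarrow> T t \<ge> 0 \<and> I t \<ge> 0 \<and> V t \<ge> 0"
    and eqT: "\<And>t. t \<ge> 0 \<Longrightarrow> (T has_real_derivative
        (s - d * T t + a * T t * (1 - (T t + I t) / Tmax) - b * T t * V t / (1 + \<alpha> * V t)))
        (at t within {0..})"
    and eqI: "\<And>t. t \<ge> 0 \<Longrightarrow> (I has_real_derivative
        (b * T (t - \<tau>) * V (t - \<tau>) / (1 + \<alpha> * V (t - \<tau>))
         + a * I t * (1 - (T t + I t) / Tmax) - \<mu> * I t))
        (at t within {0..})"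
    and eqV: "\<And>t. t \<ge> 0 \<Longrightarrow> (V has_real_derivative (p * I t - c * V t)) (at t within {0..})"
  shows "Limsup at_top (\<lambda>t. ereal (T t)) \<le> ereal (T0_bound s d a Tmax)
         \<and> (\<forall>\<epsilon>>0. \<exists>t1>0. \<forall>t>t1. T t \<le> T0_bound s d a Tmax + \<epsilon>)"
  proof -
  have Tnn: "T t \<ge> 0" if "t \<ge> -\<tau>" for t
  proof (cases "t < 0")
    case True then show ?thesis using init_nonneg that by auto
  next
    case False
    show ?thesis
    proof (rule stays_nonneg[of T])
      show "continuous_on {0..} T" by (rule continuous_on_subset[OF cont(1)]) (use tau in auto)
      show "T 0 \<ge> 0" using init_nonneg tau by auto
      show "\<And>t. t \<ge> 0 \<Longrightarrow> (T has_real_derivative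
        (s - d * T t + a * T t * (1 - (T t + I t) / Tmax) - b * T t * V t / (1 + \<alpha> * V t)))
        (at t within {0..})" by (rule eqT)
      show "\<And>t. t \<ge> 0 \<Longrightarrow> T t = 0 \<Longrightarrow>
         s - d * T t + a * T t * (1 - (T t + I t) / Tmax) - b * T t * V t / (1 + \<alpha> * V t) > 0"
        using pos by simp
    qed (use False in simp)
  qed
  have init2: "\<And>t. t \<in> {-\<tau>..0} \<Longrightarrow> I t \<ge> 0 \<and> V t \<ge> 0" using init_nonneg by auto
  have IV: "I t \<ge> 0 \<and> V t \<ge> 0" if "t \<ge> 0" for t
    by (rule IV_nonneg[OF pos(5) pos(6) pos(8) pos(9) pos(3) pos(4) pos(7) tau cont Tnn init2 eqI eqV that])
  have ev: "\<exists>t1>0. \<forall>t>t1. T t \<le> T0_bound s d a Tmax + \<epsilon>" if e: "\<epsilon> > 0" for \<epsilon>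
  proof (rule eventually_below[of T])
    show "continuous_on {0..} T" by (rule continuous_on_subset[OF cont(1)]) (use tau in auto)
    show "\<And>t. t \<ge> 0 \<Longrightarrow> (T has_real_derivative
        (s - d * T t + a * T t * (1 - (T t + I t) / Tmax) - b * T t * V t / (1 + \<alpha> * V t)))
        (at t within {0..})" by (rule eqT)
    show "a / Tmax * \<epsilon>^2 > 0" using pos e by simp
    fix t assume t: "t \<ge> 0" "T t \<ge> T0_bound s d a Tmax + \<epsilon>"
    have Tt: "T t \<ge> 0" using Tnn t tau by simp
    have It: "I t \<ge> 0" and Vt: "V t \<ge> 0" using IV t by auto
    have "a * T t * ((T t + I t) / Tmax) \<ge> a * T t * (T t / Tmax)"
      using pos Tt It by (intro mult_left_mono divide_right_mono) auto
    then have h1: "a * T t * (1 - (T t + I t) / Tmax) \<le> a * T t * (1 - T t / Tmax)"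
      by (simp add: right_diff_distrib)
    have h2: "b * T t * V t / (1 + \<alpha> * V t) \<ge> 0" using pos Tt Vt by simp
    have "s - d * T t + a * T t * (1 - T t / Tmax) \<le> - (a / Tmax) * \<epsilon>^2"
      by (rule quad_bound) (use pos e t in auto)
    then show "s - d * T t + a * T t * (1 - (T t + I t) / Tmax) - b * T t * V t / (1 + \<alpha> * V t)
        \<le> - (a / Tmax * \<epsilon>^2)" using h1 h2 by simp
  qed
  have "Limsup at_top (\<lambda>t. ereal (T t)) \<le> ereal (T0_bound s d a Tmax)"
    unfolding Limsup_le_iff
  proof (intro allI impI)
    fix y assume y: "y > ereal (T0_bound s d a Tmax)"
    obtain r where r: "r > T0_bound s d a Tmax" "ereal r \<le> y"
    proof (cases y)
      case (real r') then show ?thesis using y that by auto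
    next
      case PInf then show ?thesis using that[of "T0_bound s d a Tmax + 1"] by auto
    next
      case MInf then show ?thesis using y by auto
    qed
    obtain t1 where t1: "\<forall>t>t1. T t \<le> T0_bound s d a Tmax + (r - T0_bound s d a Tmax) / 2"
      using ev[of "(r - T0_bound s d a Tmax) / 2"] r by auto
    have "\<forall>t\<ge>t1 + 1. ereal (T t) < y"
    proof (intro allI impI)
      fix t assume "t \<ge> t1 + 1"
      then have "T t \<le> T0_bound s d a Tmax + (r - T0_bound s d a Tmax) / 2" using t1 by auto
      then have "T t < r" using r(1) by (simp add: field_simps)
      then have "ereal (T t) < ereal r" by simp
      then show "ereal (T t) < y" using r(2) by (rule less_le_trans)
    qed
    then show "\<forall>\<^sub>F x in at_top. y > ereal (T x)"
      unfolding eventually_at_top_linorder by blast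
  qed
  then show ?thesis using ev by blast
qed

end
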